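(* Let $\varepsilon>0$ and $\delta\in(0,1)$, and set $p=1-e^{-\varepsilon}$ and $k=\left\lceil\frac{1}{\varepsilon}\ln\left(\frac{e^{\varepsilon}+2\delta-1}{(e^{\varepsilon}+1)\delta}\right)\right\rceil$. Let $f$ be an integer-valued query on databases with sensitivity $1$ (i.e. $|f(D)-f(D')|\le1$ whenever $D'$ is obtained from $D$ by adding or removing one user). The truncated geometric mechanism, which on input $D$ outputs $f(D)+X$ with $X$ drawn from the $k$-truncated symmetric geometric distribution with parameter $p$, is $(\varepsilon,\delta)$-differentially private.
   Context: For $p\in(0,1)$ and an integer $k\ge1$, the $k$-truncated symmetric geometric distribution ($k$-TSGD) with parameter $p$ is the distribution on $\mathbb{Z}$ with $\Pr[X=x]=c\,(1-p)^{|x|}$ for $x\in[-k,k]\cap\mathbb{Z}$ and $0$ otherwise, where $c=\frac{p}{1+(1-p)-2(1-p)^{k+1}}$. A randomized mechanism $\mathcal{M}$ is $(\varepsilon,\delta)$-differentially private if for any databases $D,D'$ where $D'$ is obtained from $D$ by adding or removing one user, and all sets $S$ of outputs, $\Pr[\mathcal{M}(D)\in S]\le e^{\varepsilon}\Pr[\mathcal{M}(D')\in S]+\delta$. *)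

theory Defs
  imports "HOL-Probability.Probability" "HOL-Library.Multiset"
begin

text \<open>Normalising constant of the k-truncated symmetric geometric distribution.\<close>
definition tsgd_const :: "real \<Rightarrow> nat \<Rightarrow> real" where
  "tsgd_const p k = p / (1 + (1 - p) - 2 * (1 - p) ^ (k + 1))"

definition tsgd_mass :: "real \<Rightarrow> nat \<Rightarrow> int \<Rightarrow> real" where
  "tsgd_mass p k x = (if \<bar>x\<bar> \<le> int k then tsgd_const p k * (1 - p) ^ nat \<bar>x\<bar> else 0)"

definition tsgd :: "real \<Rightarrow> nat \<Rightarrow> int pmf" where
  "tsgd p k = embed_pmf (tsgd_mass p k)"

definition neighbour :: "'u multiset \<Rightarrow> 'u multiset \<Rightarrow> bool" where
  "neighbour D D' \<longleftrightarrow> (\<exists>u. D' = add_mset u D \<or> D = add_mset u D')"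

definition sensitivity_one :: "('u multiset \<Rightarrow> int) \<Rightarrow> bool" where
  "sensitivity_one f \<longleftrightarrow> (\<forall>D D'. neighbour D D' \<longrightarrow> \<bar>f D - f D'\<bar> \<le> 1)"

definition differentially_private ::
  "('u multiset \<Rightarrow> 'o pmf) \<Rightarrow> real \<Rightarrow> real \<Rightarrow> bool" where
  "differentially_private M \<epsilon> \<delta> \<longleftrightarrow>
     (\<forall>D D' S. neighbour D D' \<longrightarrow>
        measure_pmf.prob (M D) S \<le> exp \<epsilon> * measure_pmf.prob (M D') S + \<delta>)"

definition truncated_geometric_mechanism ::
  "('u multiset \<Rightarrow> int) \<Rightarrow> real \<Rightarrow> nat \<Rightarrow> 'u multiset \<Rightarrow> int pmf" where
  "truncated_geometric_mechanism f p k D = map_pmf (\<lambda>x. f D + x) (tsgd p k)"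

end

theory Submission
  imports Defs
begin

lemma geo_sum:
  fixes q :: real
  shows "(1 - q) * (\<Sum>x\<in>{-int k..int k}. q ^ nat \<bar>x\<bar>) = 1 + q - 2 * q ^ (k + 1)"
proof (induction k)
  case 0
  then show ?case by simp
next
  case (Suc k)
  have e: "{-int (Suc k)..int (Suc k)} = insert (-int (Suc k)) (insert (int (Suc k)) {-int k..int k})"
    by auto
  have "(\<Sum>x\<in>{-int (Suc k)..int (Suc k)}. q ^ nat \<bar>x\<bar>) = q ^ Suc k + q ^ Suc k + (\<Sum>x\<in>{-int k..int k}. q ^ nat \<bar>x\<bar>)"
    unfolding e by (simp add: nat_add_distrib)
  moreover have "(1 - q) * (q ^ Suc k + q ^ Suc k + (\<Sum>x\<in>{-int k..int k}. q ^ nat \<bar>x\<bar>))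
     = 2 * (1 - q) * q ^ Suc k + (1 - q) * (\<Sum>x\<in>{-int k..int k}. q ^ nat \<bar>x\<bar>)"
    by (simp add: algebra_simps)
  ultimately show ?case using Suc.IH
    by (simp only:) (simp add: algebra_simps)
qed

lemma geo_sum_pos:
  fixes q :: real assumes "0 \<le> q"
  shows "(\<Sum>x\<in>{-int k..int k}. q ^ nat \<bar>x\<bar>) \<ge> 1"
proof -
  have "(\<Sum>x\<in>{0}. q ^ nat \<bar>x\<bar>) \<le> (\<Sum>x\<in>{-int k..int k}. q ^ nat \<bar>x\<bar>)"
    by (rule sum_mono2) (use assms in auto)
  then show ?thesis by simp
qed

context
  fixes p :: real and k :: nat
  assumes p: "0 < p" "p < 1"
begin

lemma const_eq: "tsgd_const p k * (\<Sum>x\<in>{-int k..int k}. (1-p) ^ nat \<bar>x\<bar>) = 1"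
proof -
  have g: "p * (\<Sum>x\<in>{-int k..int k}. (1-p) ^ nat \<bar>x\<bar>) = 1 + (1-p) - 2 * (1-p) ^ (k + 1)"
    using geo_sum[of "1-p" k] by simp
  have "(\<Sum>x\<in>{-int k..int k}. (1-p) ^ nat \<bar>x\<bar>) \<ge> 1" using geo_sum_pos[of "1-p" k] p by simp
  then show ?thesis unfolding tsgd_const_def g[symmetric] using p by (simp add: field_simps)
qed

lemma const_pos: "tsgd_const p k > 0"
proof -
  have g: "p * (\<Sum>x\<in>{-int k..int k}. (1-p) ^ nat \<bar>x\<bar>) = 1 + (1-p) - 2 * (1-p) ^ (k + 1)"
    using geo_sum[of "1-p" k] by simp
  have "(\<Sum>x\<in>{-int k..int k}. (1-p) ^ nat \<bar>x\<bar>) \<ge> 1" using geo_sum_pos[of "1-p" k] p by simp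
  then show ?thesis unfolding tsgd_const_def g[symmetric] using p by simp
qed

lemma mass_nonneg: "0 \<le> tsgd_mass p k x"
  using const_pos p unfolding tsgd_mass_def by simp

lemma mass_sum: "(\<integral>\<^sup>+x. ennreal (tsgd_mass p k x) \<partial>count_space UNIV) = 1"
proof -
  have "(\<integral>\<^sup>+x. ennreal (tsgd_mass p k x) \<partial>count_space UNIV)
      = (\<integral>\<^sup>+x. ennreal (tsgd_mass p k x) * indicator {-int k..int k} x \<partial>count_space UNIV)"
    by (rule nn_integral_cong) (auto simp: tsgd_mass_def indicator_def)
  also have "\<dots> = (\<integral>\<^sup>+x. ennreal (tsgd_mass p k x) \<partial>count_space {-int k..int k})"
    by (simp add: nn_integral_count_space_indicator)
  also have "\<dots> = (\<Sum>x\<in>{-int k..int k}. ennreal (tsgd_mass p k x))"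
    by (simp add: nn_integral_count_space_finite)
  also have "\<dots> = ennreal (\<Sum>x\<in>{-int k..int k}. tsgd_mass p k x)"
    by (rule sum_ennreal) (simp add: mass_nonneg)
  also have "(\<Sum>x\<in>{-int k..int k}. tsgd_mass p k x) = tsgd_const p k * (\<Sum>x\<in>{-int k..int k}. (1-p) ^ nat \<bar>x\<bar>)"
    unfolding sum_distrib_left by (rule sum.cong) (auto simp: tsgd_mass_def)
  finally show ?thesis using const_eq by simp
qed

lemma pmf_tsgd: "pmf (tsgd p k) x = tsgd_mass p k x"
  unfolding tsgd_def by (rule pmf_embed_pmf[OF mass_nonneg mass_sum])

lemma set_tsgd: "set_pmf (tsgd p k) \<subseteq> {-int k..int k}"
  by (auto simp: set_pmf_eq pmf_tsgd tsgd_mass_def)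

lemma mass_step:
  assumes d: "\<bar>d\<bar> \<le> 1" and x: "\<bar>x\<bar> \<le> int k" and xd: "\<bar>x + d\<bar> \<le> int k"
  shows "tsgd_mass p k x \<le> (1 / (1 - p)) * tsgd_mass p k (x + d)"
proof -
  let ?q = "1 - p"
  have q: "0 < ?q" "?q \<le> 1" using p by auto
  have "?q ^ (nat \<bar>x\<bar> + 1) \<le> ?q ^ nat \<bar>x + d\<bar>"
    by (rule power_decreasing) (use q d in auto)
  hence "?q ^ nat \<bar>x\<bar> \<le> (1 / ?q) * ?q ^ nat \<bar>x + d\<bar>"
    using q by (simp add: field_simps)
  hence "tsgd_const p k * ?q ^ nat \<bar>x\<bar> \<le> tsgd_const p k * ((1 / ?q) * ?q ^ nat \<bar>x + d\<bar>)"
    using const_pos by (intro mult_left_mono) auto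
  then show ?thesis using x xd by (simp add: tsgd_mass_def)
qed

lemma core:
  assumes d: "d \<in> {-1, 0, 1::int}"
  shows "measure_pmf.prob (tsgd p k) A
    \<le> (1 / (1 - p)) * measure_pmf.prob (tsgd p k) ((\<lambda>x. x + d) ` A) + tsgd_const p k * (1 - p) ^ k"
proof -
  let ?T = "tsgd p k" and ?K = "{-int k..int k}"
  define B where "B = {x\<in>A \<inter> ?K. x + d \<in> ?K}"
  define C where "C = {x\<in>A \<inter> ?K. x + d \<notin> ?K}"
  have fin: "finite B" "finite C" unfolding B_def C_def
    by (rule finite_subset[of _ ?K]; auto)+
  have "measure_pmf.prob ?T A = measure_pmf.prob ?T (A \<inter> set_pmf ?T)"
    by (simp add: measure_Int_set_pmf)
  also have "\<dots> \<le> measure_pmf.prob ?T (A \<inter> ?K)"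
    using set_tsgd by (intro measure_pmf.finite_measure_mono) auto
  also have "\<dots> = sum (pmf ?T) (A \<inter> ?K)"
    by (simp add: measure_measure_pmf_finite)
  also have "A \<inter> ?K = B \<union> C" unfolding B_def C_def by auto
  also have "sum (pmf ?T) (B \<union> C) = sum (pmf ?T) B + sum (pmf ?T) C"
    by (rule sum.union_disjoint) (use fin in \<open>auto simp: B_def C_def\<close>)
  also have "sum (pmf ?T) B \<le> (\<Sum>x\<in>B. (1 / (1 - p)) * pmf ?T (x + d))"
    unfolding pmf_tsgd
    by (rule sum_mono, rule mass_step) (use d in \<open>auto simp: B_def\<close>)
  also have "\<dots> = (1 / (1 - p)) * sum (pmf ?T) ((\<lambda>x. x + d) ` B)"
    by (simp add: sum_distrib_left sum.reindex inj_on_def)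
  also have "sum (pmf ?T) ((\<lambda>x. x + d) ` B) = measure_pmf.prob ?T ((\<lambda>x. x + d) ` B)"
    using fin by (simp add: measure_measure_pmf_finite)
  also have "(1 / (1 - p)) * measure_pmf.prob ?T ((\<lambda>x. x + d) ` B) \<le> (1 / (1 - p)) * measure_pmf.prob ?T ((\<lambda>x. x + d) ` A)"
    using p by (intro mult_left_mono measure_pmf.finite_measure_mono) (auto simp: B_def)
  also have "sum (pmf ?T) C \<le> tsgd_const p k * (1 - p) ^ k"
  proof -
    have sub: "C \<subseteq> {d * int k}" using d unfolding C_def by auto
    have "sum (pmf ?T) C \<le> sum (\<lambda>_. tsgd_const p k * (1 - p) ^ k) C"
    proof (rule sum_mono)
      fix x assume "x \<in> C"
      hence "\<bar>x\<bar> = int k" using d unfolding C_def by auto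
      thus "pmf ?T x \<le> tsgd_const p k * (1 - p) ^ k" by (simp add: pmf_tsgd tsgd_mass_def)
    qed
    also have "\<dots> = card C * (tsgd_const p k * (1 - p) ^ k)" by simp
    also have "\<dots> \<le> 1 * (tsgd_const p k * (1 - p) ^ k)"
    proof (rule mult_right_mono)
      have "card C \<le> card {d * int k}" by (rule card_mono) (use sub in auto)
      thus "real (card C) \<le> 1" by simp
      show "0 \<le> tsgd_const p k * (1 - p) ^ k" using const_pos p by simp
    qed
    finally show ?thesis by simp
  qed
  finally show ?thesis by simp
qed

end

theorem theorem4:
  fixes f :: "'u multiset \<Rightarrow> int" and \<epsilon> \<delta> p :: real and k :: nat
  assumes "\<epsilon> > 0" and "0 < \<delta>" and "\<delta> < 1"
    and "p = 1 - exp (- \<epsilon>)"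
    and "k = nat \<lceil>(1 / \<epsilon>) * ln ((exp \<epsilon> + 2 * \<delta> - 1) / ((exp \<epsilon> + 1) * \<delta>))\<rceil>"
    and "sensitivity_one f"
  shows "differentially_private (truncated_geometric_mechanism f p k) \<epsilon> \<delta>"
proof -
  note eps = assms(1) and dl = assms(2,3)
  define q where "q = exp (- \<epsilon>)"
  define E where "E = exp \<epsilon>"
  have qE: "q * E = 1" unfolding q_def E_def by (simp add: exp_minus field_simps)
  have q0: "0 < q" and q1: "q < 1" unfolding q_def using eps by auto
  have E1: "E > 1" unfolding E_def using eps by simp
  have pq: "p = 1 - q" using assms(4) q_def by simp
  have p: "0 < p" "p < 1" using pq q0 q1 by auto
  have invp: "1 / (1 - p) = exp \<epsilon>"
  proof -
    have "1 - p = q" using pq by simp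
    moreover have "1 / q = E" using qE q0 by (simp add: field_simps)
    ultimately show ?thesis unfolding E_def by simp
  qed
  define Ar where "Ar = (E + 2 * \<delta> - 1) / ((E + 1) * \<delta>)"
  have Ar0: "Ar > 0" unfolding Ar_def using E1 dl by simp
  have kge: "real k \<ge> (1 / \<epsilon>) * ln Ar"
    unfolding assms(5) Ar_def E_def by linarith
  have "\<epsilon> * real k \<ge> ln Ar" using kge eps by (simp add: field_simps)
  hence "q ^ k \<le> exp (- ln Ar)"
    unfolding q_def by (simp add: exp_of_nat_mult[symmetric] mult.commute)
  hence qk: "q ^ k \<le> (E + 1) * \<delta> / (E + 2 * \<delta> - 1)"
    using Ar0 by (simp add: exp_minus Ar_def)
  have den: "1 + q - 2 * q ^ (k + 1) > 0"
  proof -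
    have "p * (\<Sum>x\<in>{-int k..int k}. q ^ nat \<bar>x\<bar>) = 1 + q - 2 * q ^ (k + 1)"
      using geo_sum[of q k] pq by simp
    moreover have "(\<Sum>x\<in>{-int k..int k}. q ^ nat \<bar>x\<bar>) \<ge> 1" using geo_sum_pos[of q k] q0 by simp
    ultimately show ?thesis using p by (metis less_le_trans mult_pos_pos zero_less_one)
  qed
  have "q * (E + 2 * \<delta> - 1) = q * E + 2 * q * \<delta> - q" by (simp add: algebra_simps)
  hence "p + 2 * q * \<delta> = q * (E + 2 * \<delta> - 1)" using pq qE by linarith
  hence "q ^ k * (p + 2 * q * \<delta>) = q ^ k * (q * (E + 2 * \<delta> - 1))" by simp
  also have "\<dots> \<le> (E + 1) * \<delta> / (E + 2 * \<delta> - 1) * (q * (E + 2 * \<delta> - 1))"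
    using qk q0 E1 dl by (intro mult_right_mono) auto
  also have "\<dots> = q * (E + 1) * \<delta>" using E1 dl by (simp add: field_simps)
  also have "\<dots> = (1 + q) * \<delta>" using qE by (simp add: algebra_simps)
  finally have "p * q ^ k \<le> \<delta> * (1 + q - 2 * q ^ (k + 1))" by (simp add: algebra_simps)
  hence "p * q ^ k / (1 + q - 2 * q ^ (k + 1)) \<le> \<delta>"
    using den by (simp add: pos_divide_le_eq mult.commute)
  moreover have "1 - p = q" using pq by simp
  ultimately have ck: "tsgd_const p k * (1 - p) ^ k \<le> \<delta>"
    unfolding tsgd_const_def by (simp only:) simp
  show ?thesis unfolding differentially_private_def
  proof (intro allI impI)
    fix D D' :: "'u multiset" and S :: "int set"
    assume nb: "neighbour D D'"
    define d where "d = f D - f D'"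
    have "\<bar>d\<bar> \<le> 1" using assms(6) nb unfolding sensitivity_one_def d_def by blast
    hence d: "d \<in> {-1, 0, 1}" by auto
    define A where "A = {x. f D + x \<in> S}"
    have img: "(\<lambda>x. x + d) ` A = {x. f D' + x \<in> S}"
    proof safe
      fix y assume "f D' + y \<in> S"
      thus "y \<in> (\<lambda>x. x + d) ` A"
        by (intro image_eqI[of _ _ "y - d"]) (auto simp: A_def d_def add.commute)
    qed (auto simp: A_def d_def add.commute)
    have "measure_pmf.prob (truncated_geometric_mechanism f p k D) S = measure_pmf.prob (tsgd p k) A"
      by (simp add: truncated_geometric_mechanism_def A_def vimage_def)
    also have "\<dots> \<le> (1 / (1 - p)) * measure_pmf.prob (tsgd p k) ((\<lambda>x. x + d) ` A) + tsgd_const p k * (1 - p) ^ k"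
      by (rule core[OF p d])
    also have "\<dots> \<le> exp \<epsilon> * measure_pmf.prob (truncated_geometric_mechanism f p k D') S + \<delta>"
      using ck invp img by (simp add: truncated_geometric_mechanism_def vimage_def)
    finally show "measure_pmf.prob (truncated_geometric_mechanism f p k D) S
        \<le> exp \<epsilon> * measure_pmf.prob (truncated_geometric_mechanism f p k D') S + \<delta>" .
  qed
qed

end
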